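(* Let $G$ be a number all of whose options are numbers. Then $G\mathbin{:}1\triangleq\{G\mid R(G)\}$ and $G\mathbin{:}(-1)\triangleq\{L(G)\mid G\}$, where $1\cong\{0\mid\ \}$ and $-1\cong\{\ \mid 0\}$ with $0\cong\{\ \mid\ \}$.
   Context: Games are short normal-play combinatorial games, written $G\cong\{L(G)\mid R(G)\}$ ($\cong$ = identical literal forms). Disjunctive sum $G+H\cong\{L(G)+H,G+L(H)\mid R(G)+H,G+R(H)\}$, negation $-G\cong\{-R(G)\mid -L(G)\}$. Ordinal sum: $G\mathbin{:}H\cong\{L(G),\,G\mathbin{:}L(H)\mid R(G),\,G\mathbin{:}R(H)\}$. A number is a game $G$ with $G^L<G<G^R$ for all options. Equivalence modulo domination: $G\triangleq H$ means that in $G+(-H)$, for every move by either player as first player in one summand, the other player has a response in the other summand after which the responder wins. *)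

theory Defs
  imports Main
begin

text \<open>Short games as literal forms: a game is given by finite lists of Left and Right
options. (Order and multiplicity of options play no role in any notion below.)\<close>

datatype game = Game (lopts: "game list") (ropts: "game list")

definition zero :: game where "zero = Game [] []"
definition one :: game where "one = Game [zero] []"
definition neg_one :: game where "neg_one = Game [] [zero]"

fun neg :: "game \<Rightarrow> game" where
  "neg (Game l r) = Game (map neg r) (map neg l)"

function plus :: "game \<Rightarrow> game \<Rightarrow> game" where
  "plus (Game gl gr) (Game hl hr) =
     Game (map (\<lambda>x. plus x (Game hl hr)) gl @ map (\<lambda>y. plus (Game gl gr) y) hl)
          (map (\<lambda>x. plus x (Game hl hr)) gr @ map (\<lambda>y. plus (Game gl gr) y) hr)"
  by pat_completeness auto
termination
proof (relation "measure (\<lambda>(g, h). size g + size h)", goal_cases)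
  case 1 then show ?case by simp
qed (auto dest!: size_list_estimation'[OF _ order_refl, where f=size])

fun ordsum :: "game \<Rightarrow> game \<Rightarrow> game" where
  "ordsum g (Game hl hr) = Game (lopts g @ map (ordsum g) hl) (ropts g @ map (ordsum g) hr)"

text \<open>Normal play: wins True g = Left, moving first in g, wins;
  wins False g = Right, moving first in g, wins.\<close>
fun wins :: "bool \<Rightarrow> game \<Rightarrow> bool" where
  "wins True (Game l r) = (\<exists>x\<in>set l. \<not> wins False x)"
| "wins False (Game l r) = (\<exists>x\<in>set r. \<not> wins True x)"

definition game_le :: "game \<Rightarrow> game \<Rightarrow> bool" where
  "game_le g h \<longleftrightarrow> \<not> wins True (plus g (neg h))"

definition game_lt :: "game \<Rightarrow> game \<Rightarrow> bool" where
  "game_lt g h \<longleftrightarrow> game_le g h \<and> \<not> game_le h g"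

definition is_number :: "game \<Rightarrow> bool" where
  "is_number g \<longleftrightarrow> (\<forall>x\<in>set (lopts g). game_lt x g) \<and> (\<forall>x\<in>set (ropts g). game_lt g x)"

text \<open>Equivalence modulo domination, literally: in g + (-h), every first move in one summand
  has a response by the opponent in the other summand after which the responder wins
  (i.e. the player now to move, the original mover, loses moving first).\<close>
definition dom_equiv :: "game \<Rightarrow> game \<Rightarrow> bool" where
  "dom_equiv g h \<longleftrightarrow>
     (\<forall>x\<in>set (lopts g). \<exists>y\<in>set (ropts (neg h)). \<not> wins True (plus x y)) \<and>
     (\<forall>y\<in>set (lopts (neg h)). \<exists>x\<in>set (ropts g). \<not> wins True (plus x y)) \<and>
     (\<forall>x\<in>set (ropts g). \<exists>y\<in>set (lopts (neg h)). \<not> wins False (plus x y)) \<and>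
     (\<forall>y\<in>set (ropts (neg h)). \<exists>x\<in>set (lopts g). \<not> wins False (plus x y))"

end

theory Submission
  imports Defs
begin

lemma game_eta: "Game (lopts g) (ropts g) = g" by (cases g) auto

lemma lopts_plus: "lopts (plus g h) = map (\<lambda>x. plus x h) (lopts g) @ map (plus g) (lopts h)"
  by (cases g; cases h) auto
lemma ropts_plus: "ropts (plus g h) = map (\<lambda>x. plus x h) (ropts g) @ map (plus g) (ropts h)"
  by (cases g; cases h) auto
lemma lopts_neg: "lopts (neg g) = map neg (ropts g)" by (cases g) auto
lemma ropts_neg: "ropts (neg g) = map neg (lopts g)" by (cases g) auto

lemma wins_T: "wins True g = (\<exists>x\<in>set (lopts g). \<not> wins False x)" by (cases g) auto
lemma wins_F: "wins False g = (\<exists>x\<in>set (ropts g). \<not> wins True x)" by (cases g) auto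

lemma wins_neg: "wins p (neg g) = wins (\<not> p) g"
proof (induction g arbitrary: p)
  case (Game l r)
  then show ?case by (cases p) auto
qed

lemma neg_plus: "neg (plus a b) = plus (neg a) (neg b)"
proof (induction a b rule: plus.induct)
  case (1 gl gr hl hr)
  then show ?case by simp
qed

lemma wins_T_plus: "wins True (plus a b) = ((\<exists>x\<in>set (lopts a). \<not> wins False (plus x b)) \<or> (\<exists>y\<in>set (lopts b). \<not> wins False (plus a y)))"
  using wins_T[of "plus a b"] lopts_plus[of a b] by auto

lemma wins_F_plus: "wins False (plus a b) = ((\<exists>x\<in>set (ropts a). \<not> wins True (plus x b)) \<or> (\<exists>y\<in>set (ropts b). \<not> wins True (plus a y)))"
  using wins_F[of "plus a b"] ropts_plus[of a b] by auto

lemma wins_comm: "wins p (plus a b) = wins p (plus b a)"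
proof (induction a b arbitrary: p rule: plus.induct)
  case (1 gl gr hl hr)
  let ?A = "Game gl gr" and ?B = "Game hl hr"
  have i1: "\<And>x q. x \<in> set gl \<union> set gr \<Longrightarrow> wins q (plus x ?B) = wins q (plus ?B x)"
    using 1 by blast
  have i2: "\<And>y q. y \<in> set hl \<union> set hr \<Longrightarrow> wins q (plus ?A y) = wins q (plus y ?A)"
    using 1 by blast
  show ?case
  proof (cases p)
    case True
    have "wins True (plus ?A ?B) = wins True (plus ?B ?A)"
      unfolding wins_T_plus game.sel using i1 i2 by blast
    then show ?thesis using True by simp
  next
    case False
    have "wins False (plus ?A ?B) = wins False (plus ?B ?A)"
      unfolding wins_F_plus game.sel using i1 i2 by blast
    then show ?thesis using False by simp
  qed
qed

lemma refl_both: "\<not> wins True (plus g (neg g)) \<and> \<not> wins False (plus g (neg g))"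
proof (induction g)
  case (Game l r)
  have IH: "\<And>x. x \<in> set l \<union> set r \<Longrightarrow> \<not> wins True (plus x (neg x)) \<and> \<not> wins False (plus x (neg x))"
    using Game by auto
  have A: "\<And>x. x \<in> set l \<Longrightarrow> wins False (plus x (neg (Game l r)))"
  proof -
    fix x assume x: "x \<in> set l"
    have "plus x (neg x) \<in> set (ropts (plus x (neg (Game l r))))"
      using x by (simp add: ropts_plus)
    then show "wins False (plus x (neg (Game l r)))" using IH x wins_F by blast
  qed
  have B: "\<And>x. x \<in> set r \<Longrightarrow> wins False (plus (Game l r) (neg x))"
  proof -
    fix x assume x: "x \<in> set r"
    have "plus x (neg x) \<in> set (ropts (plus (Game l r) (neg x)))"
      using x by (simp add: ropts_plus lopts_neg)
    then show "wins False (plus (Game l r) (neg x))" using IH x wins_F by blast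
  qed
  have C: "\<And>x. x \<in> set r \<Longrightarrow> wins True (plus x (neg (Game l r)))"
  proof -
    fix x assume x: "x \<in> set r"
    have "plus x (neg x) \<in> set (lopts (plus x (neg (Game l r))))"
      using x by (simp add: lopts_plus)
    then show "wins True (plus x (neg (Game l r)))" using IH x wins_T by blast
  qed
  have D: "\<And>x. x \<in> set l \<Longrightarrow> wins True (plus (Game l r) (neg x))"
  proof -
    fix x assume x: "x \<in> set l"
    have "plus x (neg x) \<in> set (lopts (plus (Game l r) (neg x)))"
      using x by (simp add: lopts_plus ropts_neg)
    then show "wins True (plus (Game l r) (neg x))" using IH x wins_T by blast
  qed
  have e1: "set (lopts (plus (Game l r) (neg (Game l r)))) =
     (\<lambda>x. plus x (neg (Game l r))) ` set l \<union> (\<lambda>x. plus (Game l r) (neg x)) ` set r"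
    by (simp add: lopts_plus lopts_neg image_image del: neg.simps)
  have e2: "set (ropts (plus (Game l r) (neg (Game l r)))) =
     (\<lambda>x. plus x (neg (Game l r))) ` set r \<union> (\<lambda>x. plus (Game l r) (neg x)) ` set l"
    by (simp add: ropts_plus ropts_neg image_image del: neg.simps)
  have "\<forall>x\<in>set (lopts (plus (Game l r) (neg (Game l r)))). wins False x"
    unfolding e1 using A B by blast
  then have t: "\<not> wins True (plus (Game l r) (neg (Game l r)))"
    using wins_T[of "plus (Game l r) (neg (Game l r))"] by blast
  have "\<forall>x\<in>set (ropts (plus (Game l r) (neg (Game l r)))). wins True x"
    unfolding e2 using C D by blast
  then have f: "\<not> wins False (plus (Game l r) (neg (Game l r)))"
    using wins_F[of "plus (Game l r) (neg (Game l r))"] by blast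
  show ?case using t f by blast
qed

lemma neg_neg: "neg (neg g) = g"
  by (induction g) (auto simp: map_idI)

lemma le_swap: "\<not> wins True (plus g (neg x)) \<Longrightarrow> \<not> wins False (plus x (neg g))"
proof -
  assume a: "\<not> wins True (plus g (neg x))"
  have "wins False (plus x (neg g)) = wins True (neg (plus x (neg g)))" by (simp add: wins_neg)
  also have "\<dots> = wins True (plus (neg x) g)"
    by (simp add: neg_plus neg_neg)
  also have "\<dots> = wins True (plus g (neg x))" by (rule wins_comm)
  finally show ?thesis using a by simp
qed

theorem corollary2p7:
  assumes "is_number G"
    and "\<forall>x\<in>set (lopts G) \<union> set (ropts G). is_number x"
  shows "dom_equiv (ordsum G one) (Game [G] (ropts G))
       \<and> dom_equiv (ordsum G neg_one) (Game (lopts G) [G])"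
proof -
  have r: "\<And>g. \<not> wins True (plus g (neg g))" "\<And>g. \<not> wins False (plus g (neg g))"
    using refl_both by auto
  have L: "\<And>x. x \<in> set (lopts G) \<Longrightarrow> \<not> wins True (plus x (neg G))"
    using assms(1) by (auto simp: is_number_def game_lt_def game_le_def)
  have R: "\<And>x. x \<in> set (ropts G) \<Longrightarrow> \<not> wins False (plus x (neg G))"
    using assms(1) le_swap by (auto simp: is_number_def game_lt_def game_le_def)
  have o1: "ordsum G one = Game (lopts G @ [G]) (ropts G)"
    by (simp add: one_def zero_def game_eta)
  have o2: "ordsum G neg_one = Game (lopts G) (ropts G @ [G])"
    by (simp add: neg_one_def zero_def game_eta)
  show ?thesis
    unfolding o1 o2 dom_equiv_def using r L R by auto
qed

end
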